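(* Let $d\in\mathbb{N}$ and let $G$ be a countably infinite $d$-degenerate graph. Then $G$ does not contain $d+1$ pairwise disjoint minimal ruling sets; that is, $\mathrm{rul}(G)\le d$.
   Context: A countably infinite graph $G$ is $d$-degenerate if there is an enumeration $v_1,v_2,\dots$ of $V(G)$ (indexed by $\mathbb{N}$) such that each $v_i$ has at most $d$ neighbors in $\{v_1,\dots,v_{i-1}\}$. A set $X\subseteq V(G)$ is ruling if $X$ is finite and all but finitely many vertices of $V(G)\setminus X$ have a neighbor in $X$; a minimal ruling set is a ruling set no proper subset of which is ruling. $\mathrm{rul}(G)$ is the smallest $t\in\{0,1,2,\dots\}$ such that $G$ has at most $t$ pairwise disjoint minimal ruling sets ($\infty$ if no such $t$ exists). *)

theory Defs
  imports Main "HOL-Library.Countable_Set" "HOL-Library.Extended_Nat"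
begin

definition simple_graph :: "'a set \<Rightarrow> ('a \<Rightarrow> 'a \<Rightarrow> bool) \<Rightarrow> bool" where
  "simple_graph V E \<longleftrightarrow>
     (\<forall>x y. E x y \<longrightarrow> x \<in> V \<and> y \<in> V) \<and>
     (\<forall>x y. E x y \<longrightarrow> E y x) \<and>
     (\<forall>x. \<not> E x x)"

definition countably_infinite_graph :: "'a set \<Rightarrow> ('a \<Rightarrow> 'a \<Rightarrow> bool) \<Rightarrow> bool" where
  "countably_infinite_graph V E \<longleftrightarrow> simple_graph V E \<and> countable V \<and> infinite V"

definition degenerate :: "nat \<Rightarrow> 'a set \<Rightarrow> ('a \<Rightarrow> 'a \<Rightarrow> bool) \<Rightarrow> bool" where
  "degenerate d V E \<longleftrightarrow>
     (\<exists>v :: nat \<Rightarrow> 'a. bij_betw v UNIV V \<and>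
        (\<forall>i. card {j. j < i \<and> E (v i) (v j)} \<le> d))"

definition ruling :: "'a set \<Rightarrow> ('a \<Rightarrow> 'a \<Rightarrow> bool) \<Rightarrow> 'a set \<Rightarrow> bool" where
  "ruling V E X \<longleftrightarrow> X \<subseteq> V \<and> finite X \<and>
     finite {u \<in> V - X. \<not> (\<exists>x\<in>X. E u x)}"

definition minimal_ruling :: "'a set \<Rightarrow> ('a \<Rightarrow> 'a \<Rightarrow> bool) \<Rightarrow> 'a set \<Rightarrow> bool" where
  "minimal_ruling V E X \<longleftrightarrow> ruling V E X \<and> (\<forall>Y. Y \<subset> X \<longrightarrow> \<not> ruling V E Y)"

definition at_most_disj_min_ruling :: "'a set \<Rightarrow> ('a \<Rightarrow> 'a \<Rightarrow> bool) \<Rightarrow> nat \<Rightarrow> bool" where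
  "at_most_disj_min_ruling V E t \<longleftrightarrow>
     (\<forall>F. (\<forall>X\<in>F. minimal_ruling V E X) \<and>
        (\<forall>X\<in>F. \<forall>Y\<in>F. X \<noteq> Y \<longrightarrow> X \<inter> Y = {}) \<longrightarrow> finite F \<and> card F \<le> t)"

definition rul :: "'a set \<Rightarrow> ('a \<Rightarrow> 'a \<Rightarrow> bool) \<Rightarrow> enat" where
  "rul V E = (if \<exists>t. at_most_disj_min_ruling V E t
              then enat (LEAST t. at_most_disj_min_ruling V E t) else \<infinity>)"

end

theory Submission
  imports Defs
begin

lemma key:
  fixes V :: "'a set" and E :: "'a \<Rightarrow> 'a \<Rightarrow> bool" and v :: "nat \<Rightarrow> 'a"
  assumes infV: "infinite V" and bij: "bij_betw v UNIV V"
    and deg: "\<forall>i. card {j. j < i \<and> E (v i) (v j)} \<le> d"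
    and finF: "finite F" and cF: "card F = Suc d"
    and rul: "\<forall>X\<in>F. ruling V E X"
    and disj: "\<forall>X\<in>F. \<forall>Y\<in>F. X \<noteq> Y \<longrightarrow> X \<inter> Y = {}"
  shows False
proof -
  have rV: "range v = V" using bij by (simp add: bij_betw_def)
  have injv: "inj v" using bij by (simp add: bij_betw_def)
  define U where "U = \<Union>F"
  have finU: "finite U" unfolding U_def using finF rul by (auto simp: ruling_def)
  have UV: "U \<subseteq> V" unfolding U_def using rul by (auto simp: ruling_def)
  define I where "I = inv v ` U"
  have "finite I" unfolding I_def using finU by simp
  then obtain N where N: "I \<subseteq> {..<N}" unfolding finite_nat_iff_bounded by blast
  define B where "B = U \<union> (\<Union>X\<in>F. {u\<in>V-X. \<not>(\<exists>x\<in>X. E u x)}) \<union> v ` {..<N}"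
  have "finite B" unfolding B_def using finU finF rul by (auto simp: ruling_def)
  then have "infinite (V - B)" using infV Diff_infinite_finite by blast
  then have "V - B \<noteq> {}" by (metis finite.emptyI)
  then obtain u where u: "u \<in> V" "u \<notin> B" by blast
  then obtain i where ui: "u = v i" using rV by blast
  have iN: "N \<le> i"
  proof (rule ccontr)
    assume "\<not> N \<le> i"
    then have "u \<in> v ` {..<N}" using ui by simp
    then show False using u(2) unfolding B_def by blast
  qed
  have ex: "\<exists>x\<in>X. E u x" if "X \<in> F" for X
    using that u unfolding B_def U_def by blast
  define g where "g X = (SOME x. x \<in> X \<and> E u x)" for X
  have g: "g X \<in> X \<and> E u (g X)" if "X \<in> F" for X
  proof -
    from ex[OF that] have "\<exists>x. x \<in> X \<and> E u x" by blast
    then show ?thesis unfolding g_def by (rule someI_ex)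
  qed
  define f where "f X = inv v (g X)" for X
  have vf: "v (f X) = g X" if "X \<in> F" for X
  proof -
    have "g X \<in> V" using g[OF that] that UV unfolding U_def by blast
    then show ?thesis unfolding f_def using rV by (simp add: f_inv_into_f)
  qed
  have "f ` F \<subseteq> {j. j < i \<and> E (v i) (v j)}"
  proof
    fix j assume "j \<in> f ` F"
    then obtain X where X: "X \<in> F" "j = f X" by blast
    have "g X \<in> U" using g[OF X(1)] X(1) unfolding U_def by blast
    then have "j \<in> I" unfolding I_def X(2) f_def by blast
    then have "j < i" using N iN by auto
    moreover have "E (v i) (v j)" using g[OF X(1)] vf[OF X(1)] X(2) ui by simp
    ultimately show "j \<in> {j. j < i \<and> E (v i) (v j)}" by simp
  qed
  moreover have "inj_on f F"
  proof (rule inj_onI)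
    fix X Y assume XY: "X \<in> F" "Y \<in> F" "f X = f Y"
    then have "g X = g Y" using vf[OF XY(1)] vf[OF XY(2)] by simp
    then have "g X \<in> X \<inter> Y" using g[OF XY(1)] g[OF XY(2)] by auto
    then show "X = Y" using disj XY by blast
  qed
  moreover have "finite {j. j < i \<and> E (v i) (v j)}" by simp
  ultimately have "card F \<le> card {j. j < i \<and> E (v i) (v j)}"
    by (intro card_inj_on_le) auto
  moreover have "card {j. j < i \<and> E (v i) (v j)} \<le> d" using deg by blast
  ultimately show False using cF by simp
qed

theorem mainTheorem4:
  fixes V :: "'a set" and E :: "'a \<Rightarrow> 'a \<Rightarrow> bool" and d :: nat
  assumes "countably_infinite_graph V E"
    and "degenerate d V E"
  shows "rul V E \<le> enat d"
proof -
  have infV: "infinite V" using assms(1) by (simp add: countably_infinite_graph_def)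
  obtain v :: "nat \<Rightarrow> 'a" where v: "bij_betw v UNIV V" "\<forall>i. card {j. j < i \<and> E (v i) (v j)} \<le> d"
    using assms(2) unfolding degenerate_def by blast
  have A: "at_most_disj_min_ruling V E d"
    unfolding at_most_disj_min_ruling_def
  proof (intro allI impI)
    fix F :: "'a set set"
    assume H: "(\<forall>X\<in>F. minimal_ruling V E X) \<and> (\<forall>X\<in>F. \<forall>Y\<in>F. X \<noteq> Y \<longrightarrow> X \<inter> Y = {})"
    have R: "\<forall>X\<in>F. ruling V E X" using H by (simp add: minimal_ruling_def)
    have small: False if "F' \<subseteq> F" "finite F'" "card F' = Suc d" for F'
    proof (rule key[OF infV v(1) v(2) that(2) that(3)])
      show "\<forall>X\<in>F'. ruling V E X" using R that(1) by blast
      show "\<forall>X\<in>F'. \<forall>Y\<in>F'. X \<noteq> Y \<longrightarrow> X \<inter> Y = {}" using H that(1) by blast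
    qed
    show "finite F \<and> card F \<le> d"
    proof (rule ccontr)
      assume "\<not> (finite F \<and> card F \<le> d)"
      then have "\<not> finite F \<or> Suc d \<le> card F" by auto
      then obtain F' where "F' \<subseteq> F" "finite F'" "card F' = Suc d"
      proof
        assume "\<not> finite F" then show ?thesis using infinite_arbitrarily_large that by blast
      next
        assume "Suc d \<le> card F" then show ?thesis by (rule obtain_subset_with_card_n) (rule that)
      qed
      then show False using small by blast
    qed
  qed
  then have "rul V E = enat (LEAST t. at_most_disj_min_ruling V E t)"
    unfolding rul_def using A by (simp only: if_P exI)
  moreover have "(LEAST t. at_most_disj_min_ruling V E t) \<le> d" using A by (rule Least_le)
  ultimately show ?thesis by (simp only: enat_ord_simps)
qed

end
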